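(* Let $T>0$, $r\ge0$, $\rho\in[-1,1]$, $\alpha\ge0$, let $\mu(S,t),\sigma(S,t)\ge0$ be functions on $(0,\infty)\times[0,T]$ and $a(H,t),b(H,t)$ functions on $(0,\infty)\times[0,T]$ with $b$ nonvanishing, and set $\tilde\mu(S,H,t)=\mu(S,t)-(a(H,t)-r)\rho\sigma(S,t)/b(H,t)$. Define, for $S,H>0$, $t\in[0,T]$, $v,p,z\in\mathbb R$, $$h(S,H,t,v,p,z)=\big(\tilde\mu(S,H,t)+\alpha\sqrt{1-\rho^2}\,\sigma(S,t)\,\mathrm{sgn}(p)\big)Sp+rHz-rv.$$ Assume there are constants $C_1,C_2>0$ with $|\sigma(S_1,t)-\sigma(S_2,t)|\le C_1|\ln S_1-\ln S_2|$ and $\sigma(S,t)\le C_2\sqrt{S(1+\ln S)}$ for all $S,S_1,S_2>0$, $t\in[0,T]$. Assume further that there are constants $K,C_5>0$ with $|\tilde\mu(S,H,t)|\le K(1+|\ln S|+|\ln H|)$ and $|\tilde\mu(S_1,H_1,t)-\tilde\mu(S_2,H_2,t)|\le C_5|\ln S_1-\ln S_2|$ for all $S,H,S_i,H_i>0$, $t\in[0,T]$. Then: (iii) there exist functions $d_1,d_2$ with $0\le d_1(S,H,t)\le K'S(1+|\ln S|+|\ln H|)$ and $0\le d_2(S,H,t)\le K'H(1+|\ln S|+|\ln H|)$ for some constant $K'$, such that $|h(S,H,t,v,p,z)-h(S,H,t,v,q,w)|\le d_1(S,H,t)|p-q|+d_2(S,H,t)|z-w|$ for all $S,H>0$, $t\in[0,T]$,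 $v,p,q,z,w\in\mathbb R$; and (iv) there exists $m_1>0$ such that $$\Big|h\Big(S_1,H_1,t,v,\frac{p}{S_1},\frac{q}{H_1}\Big)-h\Big(S_2,H_2,t,v,\frac{p}{S_2},\frac{q}{H_2}\Big)\Big|\le m_1\big(1+\sqrt{p^2+q^2}\big)\Big[\Big|\ln\frac{S_1}{S_2}\Big|+\Big|\ln\frac{H_1}{H_2}\Big|\Big]$$ for all $S_1,H_1,S_2,H_2>0$, $t\in[0,T]$, $v,p,q\in\mathbb R$.
   Context: $h$ is the first-order part of the writer's pricing PDE for an option on a non-traded asset $S$ hedged with a correlated traded asset $H$; properties (iii) and (iv) are the hypotheses on the nonlinearity needed for a comparison principle for the operator $v_t+\frac12\sigma^2S^2v_{SS}+\rho\sigma bSHv_{SH}+\frac12b^2H^2v_{HH}+h(S,H,t,v,v_S,v_H)$. Here $\mathrm{sgn}$ denotes the sign function. *)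

theory Defs
  imports "HOL-Analysis.Analysis"
begin

definition mu_tilde ::
  "(real \<Rightarrow> real \<Rightarrow> real) \<Rightarrow> (real \<Rightarrow> real \<Rightarrow> real) \<Rightarrow>
   (real \<Rightarrow> real \<Rightarrow> real) \<Rightarrow> (real \<Rightarrow> real \<Rightarrow> real) \<Rightarrow> real \<Rightarrow> real \<Rightarrow>
   real \<Rightarrow> real \<Rightarrow> real \<Rightarrow> real" where
  "mu_tilde \<mu> \<sigma> a b r \<rho> S H t = \<mu> S t - (a H t - r) * \<rho> * \<sigma> S t / b H t"

definition hfun ::
  "(real \<Rightarrow> real \<Rightarrow> real) \<Rightarrow> (real \<Rightarrow> real \<Rightarrow> real) \<Rightarrow>
   (real \<Rightarrow> real \<Rightarrow> real) \<Rightarrow> (real \<Rightarrow> real \<Rightarrow> real) \<Rightarrow> real \<Rightarrow> real \<Rightarrow> real \<Rightarrow>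
   real \<Rightarrow> real \<Rightarrow> real \<Rightarrow> real \<Rightarrow> real \<Rightarrow> real \<Rightarrow> real" where
  "hfun \<mu> \<sigma> a b r \<rho> \<alpha> S H t v p z =
     (mu_tilde \<mu> \<sigma> a b r \<rho> S H t + \<alpha> * sqrt (1 - \<rho>\<^sup>2) * \<sigma> S t * sgn p) * S * p
     + r * H * z - r * v"

end

theory Submission
  imports Defs
begin

lemma sgn_mul_self: "sgn (p::real) * p = \<bar>p\<bar>"
  by (cases "p > 0"; cases "p = 0") auto

lemma hfun_diff1:
  "hfun \<mu> \<sigma> a b r \<rho> \<alpha> S H t v p z - hfun \<mu> \<sigma> a b r \<rho> \<alpha> S H t v q w
   = mu_tilde \<mu> \<sigma> a b r \<rho> S H t * S * (p - q)
     + \<alpha> * sqrt (1 - \<rho>\<^sup>2) * \<sigma> S t * S * (\<bar>p\<bar> - \<bar>q\<bar>) + r * H * (z - w)"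
  unfolding hfun_def sgn_mul_self[symmetric] by (simp add: algebra_simps)

theorem lemmaA2:
  fixes \<mu> \<sigma> a b :: "real \<Rightarrow> real \<Rightarrow> real"
    and T r \<rho> \<alpha> C1 C2 K C5 :: real
  assumes T: "T > 0" and r: "r \<ge> 0" and rho: "-1 \<le> \<rho>" "\<rho> \<le> 1" and alpha: "\<alpha> \<ge> 0"
    and mu_nonneg: "\<And>S t. S > 0 \<Longrightarrow> t \<in> {0..T} \<Longrightarrow> \<mu> S t \<ge> 0"
    and sigma_nonneg: "\<And>S t. S > 0 \<Longrightarrow> t \<in> {0..T} \<Longrightarrow> \<sigma> S t \<ge> 0"
    and b_nz: "\<And>H t. H > 0 \<Longrightarrow> t \<in> {0..T} \<Longrightarrow> b H t \<noteq> 0"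
    and C1: "C1 > 0" and C2: "C2 > 0"
    and sigma_lip: "\<And>S1 S2 t. S1 > 0 \<Longrightarrow> S2 > 0 \<Longrightarrow> t \<in> {0..T} \<Longrightarrow>
          \<bar>\<sigma> S1 t - \<sigma> S2 t\<bar> \<le> C1 * \<bar>ln S1 - ln S2\<bar>"
    and sigma_growth: "\<And>S t. S > 0 \<Longrightarrow> 1 + ln S \<ge> 0 \<Longrightarrow> t \<in> {0..T} \<Longrightarrow>
          \<sigma> S t \<le> C2 * sqrt (S * (1 + ln S))"
    and K: "K > 0" and C5: "C5 > 0"
    and mut_growth: "\<And>S H t. S > 0 \<Longrightarrow> H > 0 \<Longrightarrow> t \<in> {0..T} \<Longrightarrow>
          \<bar>mu_tilde \<mu> \<sigma> a b r \<rho> S H t\<bar> \<le> K * (1 + \<bar>ln S\<bar> + \<bar>ln H\<bar>)"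
    and mut_lip: "\<And>S1 H1 S2 H2 t. S1 > 0 \<Longrightarrow> H1 > 0 \<Longrightarrow> S2 > 0 \<Longrightarrow> H2 > 0 \<Longrightarrow> t \<in> {0..T} \<Longrightarrow>
          \<bar>mu_tilde \<mu> \<sigma> a b r \<rho> S1 H1 t - mu_tilde \<mu> \<sigma> a b r \<rho> S2 H2 t\<bar>
            \<le> C5 * \<bar>ln S1 - ln S2\<bar>"
  shows "(\<exists>(d1 :: real \<Rightarrow> real \<Rightarrow> real \<Rightarrow> real) (d2 :: real \<Rightarrow> real \<Rightarrow> real \<Rightarrow> real) (K' :: real).
            (\<forall>S H t. S > 0 \<longrightarrow> H > 0 \<longrightarrow> t \<in> {0..T} \<longrightarrow>
               0 \<le> d1 S H t \<and> d1 S H t \<le> K' * S * (1 + \<bar>ln S\<bar> + \<bar>ln H\<bar>) \<and>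
               0 \<le> d2 S H t \<and> d2 S H t \<le> K' * H * (1 + \<bar>ln S\<bar> + \<bar>ln H\<bar>)) \<and>
            (\<forall>S H t v p q z w. S > 0 \<longrightarrow> H > 0 \<longrightarrow> t \<in> {0..T} \<longrightarrow>
               \<bar>hfun \<mu> \<sigma> a b r \<rho> \<alpha> S H t v p z - hfun \<mu> \<sigma> a b r \<rho> \<alpha> S H t v q w\<bar>
                 \<le> d1 S H t * \<bar>p - q\<bar> + d2 S H t * \<bar>z - w\<bar>))
       \<and> (\<exists>m1 > 0. \<forall>S1 H1 S2 H2 t v p q. S1 > 0 \<longrightarrow> H1 > 0 \<longrightarrow> S2 > 0 \<longrightarrow> H2 > 0 \<longrightarrow> t \<in> {0..T} \<longrightarrow>
               \<bar>hfun \<mu> \<sigma> a b r \<rho> \<alpha> S1 H1 t v (p / S1) (q / H1)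
                 - hfun \<mu> \<sigma> a b r \<rho> \<alpha> S2 H2 t v (p / S2) (q / H2)\<bar>
               \<le> m1 * (1 + sqrt (p\<^sup>2 + q\<^sup>2)) * (\<bar>ln (S1 / S2)\<bar> + \<bar>ln (H1 / H2)\<bar>))"
proof
  define c where "c = \<alpha> * sqrt (1 - \<rho>\<^sup>2)"
  have r2: "\<rho>\<^sup>2 \<le> 1" proof - have "0 \<le> (1 - \<rho>) * (1 + \<rho>)" using rho by simp then show ?thesis by (simp add: power2_eq_square algebra_simps) qed
  have sq: "sqrt (1 - \<rho>\<^sup>2) \<le> 1" "0 \<le> sqrt (1 - \<rho>\<^sup>2)" using r2 by auto
  have c0: "0 \<le> c" and c1: "c \<le> \<alpha>" unfolding c_def using sq alpha
    by (auto intro: mult_left_le)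
  let ?M = "mu_tilde \<mu> \<sigma> a b r \<rho>"
  have sig_bd: "\<sigma> S t \<le> C2 + C1 * \<bar>ln S\<bar>" if "S > 0" "t \<in> {0..T}" for S t
  proof -
    have "\<sigma> 1 t \<le> C2" using sigma_growth[of 1 t] that by simp
    moreover have "\<bar>\<sigma> S t - \<sigma> 1 t\<bar> \<le> C1 * \<bar>ln S\<bar>" using sigma_lip[of S 1 t] that by simp
    ultimately show ?thesis by linarith
  qed
  define d1 where "d1 = (\<lambda>S H t. (\<bar>?M S H t\<bar> + c * \<sigma> S t) * S)"
  define d2 where "d2 = (\<lambda>(S::real) (H::real) (t::real). r * H)"
  define K' where "K' = K + \<alpha> * (C2 + C1) + r"
  show "\<exists>d1 d2 K'. (\<forall>S H t. S > 0 \<longrightarrow> H > 0 \<longrightarrow> t \<in> {0..T} \<longrightarrow>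
               0 \<le> d1 S H t \<and> d1 S H t \<le> K' * S * (1 + \<bar>ln S\<bar> + \<bar>ln H\<bar>) \<and>
               0 \<le> d2 S H t \<and> d2 S H t \<le> K' * H * (1 + \<bar>ln S\<bar> + \<bar>ln H\<bar>)) \<and>
            (\<forall>S H t v p q z w. S > 0 \<longrightarrow> H > 0 \<longrightarrow> t \<in> {0..T} \<longrightarrow>
               \<bar>hfun \<mu> \<sigma> a b r \<rho> \<alpha> S H t v p z - hfun \<mu> \<sigma> a b r \<rho> \<alpha> S H t v q w\<bar>
                 \<le> d1 S H t * \<bar>p - q\<bar> + d2 S H t * \<bar>z - w\<bar>)"
  proof (rule exI[of _ d1], rule exI[of _ d2], rule exI[of _ K'], intro conjI allI impI)
    fix S H t :: real assume S: "S > 0" and H: "H > 0" and t: "t \<in> {0..T}"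
    let ?L = "1 + \<bar>ln S\<bar> + \<bar>ln H\<bar>"
    have L1: "1 \<le> ?L" by simp
    have s0: "0 \<le> \<sigma> S t" using sigma_nonneg S t by auto
    show "0 \<le> d1 S H t" unfolding d1_def using s0 c0 S by simp
    show "0 \<le> d2 S H t" unfolding d2_def using r H by simp
    have "c * \<sigma> S t \<le> \<alpha> * (C2 + C1 * \<bar>ln S\<bar>)"
      using mult_mono[OF c1 sig_bd[OF S t] alpha s0] by simp
    also have "\<dots> \<le> \<alpha> * ((C2 + C1) * ?L)"
      apply (rule mult_left_mono[OF _ alpha])
      using C1 C2 by (simp add: algebra_simps)
    finally have A: "c * \<sigma> S t \<le> \<alpha> * (C2 + C1) * ?L" by simp
    have B: "\<bar>?M S H t\<bar> \<le> K * ?L" using mut_growth S H t by blast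
    have "\<bar>?M S H t\<bar> + c * \<sigma> S t \<le> K' * ?L"
    proof -
      have "0 \<le> r * ?L" using r L1 by simp
      then show ?thesis using A B unfolding K'_def distrib_right by linarith
    qed
    note mm = mult_right_mono[OF this less_imp_le[OF S]]
    show "d1 S H t \<le> K' * S * ?L" using mm unfolding d1_def by (simp add: mult_ac)
    have "r \<le> K' * ?L"
    proof -
      have "r \<le> r * ?L" using mult_left_mono[OF L1 r] by simp
      moreover have "0 \<le> K * ?L" using K L1 by simp
      moreover have "0 \<le> \<alpha> * (C2 + C1) * ?L" using alpha C1 C2 L1 by simp
      ultimately show ?thesis unfolding K'_def distrib_right by linarith
    qed
    note mm = mult_right_mono[OF this less_imp_le[OF H]]
    show "d2 S H t \<le> K' * H * ?L" using mm unfolding d2_def by (simp add: mult_ac)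
  next
    fix S H t v p q z w :: real assume S: "S > 0" and H: "H > 0" and t: "t \<in> {0..T}"
    have s0: "0 \<le> \<sigma> S t" using sigma_nonneg S t by auto
    have e: "hfun \<mu> \<sigma> a b r \<rho> \<alpha> S H t v p z - hfun \<mu> \<sigma> a b r \<rho> \<alpha> S H t v q w
      = ?M S H t * S * (p - q) + c * \<sigma> S t * S * (\<bar>p\<bar> - \<bar>q\<bar>) + r * H * (z - w)"
      unfolding c_def by (rule hfun_diff1)
    have a1: "\<bar>?M S H t * S * (p - q)\<bar> \<le> \<bar>?M S H t\<bar> * S * \<bar>p - q\<bar>"
      using S by (simp add: abs_mult)
    have a2: "\<bar>c * \<sigma> S t * S * (\<bar>p\<bar> - \<bar>q\<bar>)\<bar> \<le> c * \<sigma> S t * S * \<bar>p - q\<bar>"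
    proof -
      have "\<bar>c * \<sigma> S t * S * (\<bar>p\<bar> - \<bar>q\<bar>)\<bar> = c * \<sigma> S t * S * \<bar>\<bar>p\<bar> - \<bar>q\<bar>\<bar>"
        using c0 s0 S by (simp add: abs_mult)
      also have "\<dots> \<le> c * \<sigma> S t * S * \<bar>p - q\<bar>"
        apply (rule mult_left_mono) using c0 s0 S by auto
      finally show ?thesis .
    qed
    have a3: "\<bar>r * H * (z - w)\<bar> = r * H * \<bar>z - w\<bar>" using r H by (simp add: abs_mult)
    show "\<bar>hfun \<mu> \<sigma> a b r \<rho> \<alpha> S H t v p z - hfun \<mu> \<sigma> a b r \<rho> \<alpha> S H t v q w\<bar>
                 \<le> d1 S H t * \<bar>p - q\<bar> + d2 S H t * \<bar>z - w\<bar>"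
    proof -
      let ?X = "?M S H t * S * (p - q)" and ?Y = "c * \<sigma> S t * S * (\<bar>p\<bar> - \<bar>q\<bar>)"
        and ?Z = "r * H * (z - w)"
      have tri: "\<bar>?X + ?Y + ?Z\<bar> \<le> \<bar>?X\<bar> + \<bar>?Y\<bar> + \<bar>?Z\<bar>"
        using abs_triangle_ineq[of "?X + ?Y" ?Z] abs_triangle_ineq[of ?X ?Y] by linarith
      have d1e: "d1 S H t * \<bar>p - q\<bar> = \<bar>?M S H t\<bar> * S * \<bar>p - q\<bar> + c * \<sigma> S t * S * \<bar>p - q\<bar>"
        unfolding d1_def by (simp only: distrib_right)
      have d2e: "d2 S H t * \<bar>z - w\<bar> = r * H * \<bar>z - w\<bar>" unfolding d2_def by simp
      show ?thesis unfolding e d1e d2e using tri a1 a2 a3 by linarith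
    qed
  qed
next
  define c where "c = \<alpha> * sqrt (1 - \<rho>\<^sup>2)"
  have r2: "\<rho>\<^sup>2 \<le> 1" proof - have "0 \<le> (1 - \<rho>) * (1 + \<rho>)" using rho by simp then show ?thesis by (simp add: power2_eq_square algebra_simps) qed
  have sq: "sqrt (1 - \<rho>\<^sup>2) \<le> 1" "0 \<le> sqrt (1 - \<rho>\<^sup>2)" using r2 by auto
  have c0: "0 \<le> c" and c1: "c \<le> \<alpha>" unfolding c_def using sq alpha
    by (auto intro: mult_left_le)
  let ?M = "mu_tilde \<mu> \<sigma> a b r \<rho>"
  show "\<exists>m1 > 0. \<forall>S1 H1 S2 H2 t v p q. S1 > 0 \<longrightarrow> H1 > 0 \<longrightarrow> S2 > 0 \<longrightarrow> H2 > 0 \<longrightarrow> t \<in> {0..T} \<longrightarrow>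
               \<bar>hfun \<mu> \<sigma> a b r \<rho> \<alpha> S1 H1 t v (p / S1) (q / H1)
                 - hfun \<mu> \<sigma> a b r \<rho> \<alpha> S2 H2 t v (p / S2) (q / H2)\<bar>
               \<le> m1 * (1 + sqrt (p\<^sup>2 + q\<^sup>2)) * (\<bar>ln (S1 / S2)\<bar> + \<bar>ln (H1 / H2)\<bar>)"
  proof (intro exI[of _ "C5 + \<alpha> * C1"] conjI allI impI)
    show "0 < C5 + \<alpha> * C1" using C5 C1 alpha by (simp add: add_pos_nonneg)
    fix S1 H1 S2 H2 t v p q :: real
    assume S1: "S1 > 0" and H1: "H1 > 0" and S2: "S2 > 0" and H2: "H2 > 0" and t: "t \<in> {0..T}"
    let ?D = "\<bar>ln S1 - ln S2\<bar>"
    have hv: "hfun \<mu> \<sigma> a b r \<rho> \<alpha> S H t v (p / S) (q / H)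
       = ?M S H t * p + c * \<sigma> S t * \<bar>p\<bar> + r * q - r * v" if "S > 0" "H > 0" for S H
    proof -
      have sg: "sgn (p / S) = sgn p" using that by (simp add: sgn_divide)
      have "hfun \<mu> \<sigma> a b r \<rho> \<alpha> S H t v (p / S) (q / H)
          = (?M S H t + c * \<sigma> S t * sgn p) * (S * (p / S)) + r * (H * (q / H)) - r * v"
        unfolding hfun_def c_def sg by (simp only: mult.assoc)
      also have "\<dots> = (?M S H t + c * \<sigma> S t * sgn p) * p + r * q - r * v"
        using that by simp
      also have "\<dots> = ?M S H t * p + c * \<sigma> S t * (sgn p * p) + r * q - r * v"
        by (simp only: distrib_right mult.assoc)
      finally show ?thesis by (simp only: sgn_mul_self)
    qed
    have e: "hfun \<mu> \<sigma> a b r \<rho> \<alpha> S1 H1 t v (p / S1) (q / H1)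
                 - hfun \<mu> \<sigma> a b r \<rho> \<alpha> S2 H2 t v (p / S2) (q / H2)
       = (?M S1 H1 t - ?M S2 H2 t) * p + c * (\<sigma> S1 t - \<sigma> S2 t) * \<bar>p\<bar>"
      using hv[OF S1 H1] hv[OF S2 H2] by (simp add: algebra_simps)
    have b1: "\<bar>(?M S1 H1 t - ?M S2 H2 t) * p\<bar> \<le> C5 * ?D * \<bar>p\<bar>"
      unfolding abs_mult by (rule mult_right_mono[OF mut_lip[OF S1 H1 S2 H2 t]]) simp
    have b2: "\<bar>c * (\<sigma> S1 t - \<sigma> S2 t) * \<bar>p\<bar>\<bar> \<le> \<alpha> * C1 * ?D * \<bar>p\<bar>"
    proof -
      have "\<bar>c * (\<sigma> S1 t - \<sigma> S2 t) * \<bar>p\<bar>\<bar> = c * \<bar>\<sigma> S1 t - \<sigma> S2 t\<bar> * \<bar>p\<bar>"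
        using c0 by (simp add: abs_mult)
      also have "\<dots> \<le> \<alpha> * (C1 * ?D) * \<bar>p\<bar>"
        by (intro mult_right_mono mult_mono c1 sigma_lip[OF S1 S2 t] alpha) (use c0 in auto)
      finally show ?thesis by (simp add: mult_ac)
    qed
    have pb: "\<bar>p\<bar> \<le> 1 + sqrt (p\<^sup>2 + q\<^sup>2)"
    proof -
      have "\<bar>p\<bar> \<le> sqrt (p\<^sup>2 + q\<^sup>2)"
        using real_sqrt_le_mono[of "p\<^sup>2" "p\<^sup>2 + q\<^sup>2"] by simp
      then show ?thesis by linarith
    qed
    have lnq: "ln (S1 / S2) = ln S1 - ln S2" using S1 S2 by (simp add: ln_div)
    have m0: "0 \<le> (C5 + \<alpha> * C1) * ?D" using C5 C1 alpha by (simp add: add_nonneg_nonneg)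
    have "\<bar>hfun \<mu> \<sigma> a b r \<rho> \<alpha> S1 H1 t v (p / S1) (q / H1)
                 - hfun \<mu> \<sigma> a b r \<rho> \<alpha> S2 H2 t v (p / S2) (q / H2)\<bar>
          \<le> (C5 + \<alpha> * C1) * ?D * \<bar>p\<bar>"
      unfolding e using b1 b2 abs_triangle_ineq[of "(?M S1 H1 t - ?M S2 H2 t) * p" "c * (\<sigma> S1 t - \<sigma> S2 t) * \<bar>p\<bar>"]
      by (simp add: algebra_simps)
    also have "\<dots> \<le> (C5 + \<alpha> * C1) * ?D * (1 + sqrt (p\<^sup>2 + q\<^sup>2))"
      by (rule mult_left_mono[OF pb m0])
    also have "\<dots> \<le> (C5 + \<alpha> * C1) * (1 + sqrt (p\<^sup>2 + q\<^sup>2)) * (\<bar>ln (S1 / S2)\<bar> + \<bar>ln (H1 / H2)\<bar>)"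
      unfolding lnq using C5 C1 alpha
      by (simp add: algebra_simps)
    finally show "\<bar>hfun \<mu> \<sigma> a b r \<rho> \<alpha> S1 H1 t v (p / S1) (q / H1)
                 - hfun \<mu> \<sigma> a b r \<rho> \<alpha> S2 H2 t v (p / S2) (q / H2)\<bar>
               \<le> (C5 + \<alpha> * C1) * (1 + sqrt (p\<^sup>2 + q\<^sup>2)) * (\<bar>ln (S1 / S2)\<bar> + \<bar>ln (H1 / H2)\<bar>)" .
  qed
qed

end
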